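(* If $\mathcal R$ is a TRS that is complete modulo $\mathcal B$, then $\ddot{\mathcal R}$ is a TRS which is normalization equivalent modulo $\mathcal B$ to $\mathcal R$, conversion equivalent modulo $\mathcal B$ to $\mathcal R$, and canonical modulo $\mathcal B$.
   Context: Terms over a signature $\mathcal F$; $s\to_{\mathcal R}t$ is the usual rewrite relation (closure under contexts and substitutions), $\leftarrow$ its inverse. $\mathcal B$ is a fixed ES with $\mathrm{Var}(\ell)=\mathrm{Var}(r)$ for all $\ell\approx r\in\mathcal B$, $\sim_{\mathcal B}=\leftrightarrow^*_{\mathcal B}$, $\to_{\mathcal R/\mathcal B}=\sim_{\mathcal B}\cdot\to_{\mathcal R}\cdot\sim_{\mathcal B}$. $\mathcal R$ is terminating modulo $\mathcal B$ if $\to_{\mathcal R/\mathcal B}$ has no infinite sequence; Church–Rosser modulo $\mathcal B$ if $\leftrightarrow^*_{\mathcal R\cup\mathcal B}\subseteq\to^*_{\mathcal R}\cdot\sim_{\mathcal B}\cdot\leftarrow^*_{\mathcal R}$; complete modulo $\mathcal B$ if both. TRSs $\mathcal R,\mathcal S$ are normalization equivalent modulo $\mathcal B$ if $\to^!_{\mathcal R}\cdot\sim_{\mathcal B}=\to^!_{\mathcal S}\cdot\sim_{\mathcal B}$ ($a\to^!b$: $a\to^*b$ with $b$ a normal form), and conversion equivalent modulo $\mathcal B$ if $\leftrightarrow^*_{\mathcal R\cup\mathcal B}=\leftrightarrow^*_{\mathcal S\cup\mathcal B}$. Two rules $\ell\to r,\ell'\to r'$ are right-$\mathcal B$-equivalent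 variants if there is a renaming $\sigma$ with $\ell\sigma=\ell'$ and $r\sigma\sim_{\mathcal B}r'$; for a TRS $\mathcal T$, $\mathcal T_{\simeq}$ denotes a subset of $\mathcal T$ containing exactly one representative of each class of rules of $\mathcal T$ that are right-$\mathcal B$-equivalent variants of each other. A TRS is left-reduced if for every rule $\ell\to r$, $\ell$ is a normal form of the TRS without that rule; right-$\mathcal B$-reduced if for every rule $\ell\to r$, $r$ is a normal form of $\to_{\mathcal R/\mathcal B}$; canonical modulo $\mathcal B$ if complete modulo $\mathcal B$, left-reduced and right-$\mathcal B$-reduced. For $\mathcal R$ terminating modulo $\mathcal B$: $\dot{\mathcal R}=\{\ell\to r{\downarrow_{\mathcal R/\mathcal B}}\mid\ell\to r\in\mathcal R\}_{\simeq}$, where $r{\downarrow_{\mathcal R/\mathcal B}}$ is an arbitrary normal form of $r$ w.r.t. $\to_{\mathcal R/\mathcal B}$, and $\ddot{\mathcal R}=\{\ell\to r\in\dot{\mathcal R}\mid \ell\text{ is a normal form of }\dot{\mathcal R}\setminus\{\ell\to r\}\}$. *)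

theory Defs
  imports Main
begin

datatype ('f, 'v) "term" = Var 'v | Fun 'f "('f, 'v) term list"

type_synonym ('f, 'v) rule = "('f, 'v) term \<times> ('f, 'v) term"
type_synonym ('f, 'v) trs = "('f, 'v) rule set"

fun vars_term :: "('f, 'v) term \<Rightarrow> 'v set" where
  "vars_term (Var x) = {x}"
| "vars_term (Fun f ts) = (\<Union>t \<in> set ts. vars_term t)"

fun subst_apply :: "('f, 'v) term \<Rightarrow> ('v \<Rightarrow> ('f, 'v) term) \<Rightarrow> ('f, 'v) term" where
  "subst_apply (Var x) \<sigma> = \<sigma> x"
| "subst_apply (Fun f ts) \<sigma> = Fun f (map (\<lambda>t. subst_apply t \<sigma>) ts)"

datatype ('f, 'v) ctxt =
  Hole
| More 'f "('f, 'v) term list" "('f, 'v) ctxt" "('f, 'v) term list"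

fun ctxt_apply :: "('f, 'v) ctxt \<Rightarrow> ('f, 'v) term \<Rightarrow> ('f, 'v) term" where
  "ctxt_apply Hole t = t"
| "ctxt_apply (More f ss C ts) t = Fun f (ss @ ctxt_apply C t # ts)"

definition rstep :: "('f, 'v) trs \<Rightarrow> ('f, 'v) term rel" where
  "rstep R = {(ctxt_apply C (subst_apply l \<sigma>), ctxt_apply C (subst_apply r \<sigma>)) | C l r \<sigma>. (l, r) \<in> R}"

definition conv :: "('f, 'v) trs \<Rightarrow> ('f, 'v) term rel" where
  "conv E = (rstep E \<union> (rstep E)\<inverse>)\<^sup>*"

abbreviation equivB :: "('f, 'v) trs \<Rightarrow> ('f, 'v) term rel" where
  "equivB B \<equiv> conv B"

definition relto :: "('f, 'v) trs \<Rightarrow> ('f, 'v) trs \<Rightarrow> ('f, 'v) term rel" where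
  "relto R B = equivB B O rstep R O equivB B"

definition NF :: "'a rel \<Rightarrow> 'a set" where
  "NF r = {a. \<not> (\<exists>b. (a, b) \<in> r)}"

definition normalizability :: "'a rel \<Rightarrow> 'a rel" where
  "normalizability r = {(a, b). (a, b) \<in> r\<^sup>* \<and> b \<in> NF r}"

definition SN_rel :: "'a rel \<Rightarrow> bool" where
  "SN_rel r \<longleftrightarrow> \<not> (\<exists>f. \<forall>i. (f i, f (Suc i)) \<in> r)"

definition wf_trs :: "('f, 'v) trs \<Rightarrow> bool" where
  "wf_trs R \<longleftrightarrow> (\<forall>(l, r) \<in> R. (\<forall>x. l \<noteq> Var x) \<and> vars_term r \<subseteq> vars_term l)"

definition terminating_mod :: "('f, 'v) trs \<Rightarrow> ('f, 'v) trs \<Rightarrow> bool" where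
  "terminating_mod R B \<longleftrightarrow> SN_rel (relto R B)"

definition CR_mod :: "('f, 'v) trs \<Rightarrow> ('f, 'v) trs \<Rightarrow> bool" where
  "CR_mod R B \<longleftrightarrow> conv (R \<union> B) \<subseteq> (rstep R)\<^sup>* O equivB B O ((rstep R)\<inverse>)\<^sup>*"

definition complete_mod :: "('f, 'v) trs \<Rightarrow> ('f, 'v) trs \<Rightarrow> bool" where
  "complete_mod R B \<longleftrightarrow> terminating_mod R B \<and> CR_mod R B"

definition normalization_equivalent_mod :: "('f, 'v) trs \<Rightarrow> ('f, 'v) trs \<Rightarrow> ('f, 'v) trs \<Rightarrow> bool" where
  "normalization_equivalent_mod R S B \<longleftrightarrow>
     normalizability (rstep R) O equivB B = normalizability (rstep S) O equivB B"

definition conversion_equivalent_mod :: "('f, 'v) trs \<Rightarrow> ('f, 'v) trs \<Rightarrow> ('f, 'v) trs \<Rightarrow> bool" where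
  "conversion_equivalent_mod R S B \<longleftrightarrow> conv (R \<union> B) = conv (S \<union> B)"

definition left_reduced :: "('f, 'v) trs \<Rightarrow> bool" where
  "left_reduced R \<longleftrightarrow> (\<forall>(l, r) \<in> R. l \<in> NF (rstep (R - {(l, r)})))"

definition right_reduced_mod :: "('f, 'v) trs \<Rightarrow> ('f, 'v) trs \<Rightarrow> bool" where
  "right_reduced_mod R B \<longleftrightarrow> (\<forall>(l, r) \<in> R. r \<in> NF (relto R B))"

definition canonical_mod :: "('f, 'v) trs \<Rightarrow> ('f, 'v) trs \<Rightarrow> bool" where
  "canonical_mod R B \<longleftrightarrow> complete_mod R B \<and> left_reduced R \<and> right_reduced_mod R B"

definition renaming :: "('v \<Rightarrow> ('f, 'v) term) \<Rightarrow> bool" where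
  "renaming \<sigma> \<longleftrightarrow> (\<exists>\<pi>. bij \<pi> \<and> \<sigma> = (\<lambda>x. Var (\<pi> x)))"

definition right_variant :: "('f, 'v) trs \<Rightarrow> ('f, 'v) rule \<Rightarrow> ('f, 'v) rule \<Rightarrow> bool" where
  "right_variant B \<rho> \<rho>' \<longleftrightarrow>
     (\<exists>\<sigma>. renaming \<sigma> \<and> subst_apply (fst \<rho>) \<sigma> = fst \<rho>' \<and>
          (subst_apply (snd \<rho>) \<sigma>, snd \<rho>') \<in> equivB B)"

text \<open>S is a choice of T_\<simeq>: a subset of T with exactly one representative of each
  class of right-B-equivalent variants.\<close>
definition is_variant_reps :: "('f, 'v) trs \<Rightarrow> ('f, 'v) trs \<Rightarrow> ('f, 'v) trs \<Rightarrow> bool" where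
  "is_variant_reps B T S \<longleftrightarrow>
     S \<subseteq> T \<and>
     (\<forall>\<rho> \<in> T. \<exists>\<rho>' \<in> S. right_variant B \<rho> \<rho>') \<and>
     (\<forall>\<rho>1 \<in> S. \<forall>\<rho>2 \<in> S. right_variant B \<rho>1 \<rho>2 \<longrightarrow> \<rho>1 = \<rho>2)"

definition nf_choice :: "('f, 'v) trs \<Rightarrow> ('f, 'v) trs \<Rightarrow> (('f, 'v) term \<Rightarrow> ('f, 'v) term) \<Rightarrow> bool" where
  "nf_choice R B nf \<longleftrightarrow> (\<forall>t. (t, nf t) \<in> (relto R B)\<^sup>* \<and> nf t \<in> NF (relto R B))"

text \<open>Rdot: a choice of {l -> nf r | l -> r in R}_\<simeq>.\<close>
definition is_Rdot :: "('f, 'v) trs \<Rightarrow> ('f, 'v) trs \<Rightarrow> ('f, 'v) trs \<Rightarrow> bool" where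
  "is_Rdot R B D \<longleftrightarrow>
     (\<exists>nf. nf_choice R B nf \<and> is_variant_reps B {(l, nf r) | l r. (l, r) \<in> R} D)"

definition Rddot :: "('f, 'v) trs \<Rightarrow> ('f, 'v) trs" where
  "Rddot D = {(l, r) \<in> D. l \<in> NF (rstep (D - {(l, r)}))}"

end

theory Submission
  imports Defs "HOL-Combinatorics.Transposition"
begin


fun tsz :: "('f,'v) term \<Rightarrow> nat" where
  "tsz (Var x) = 1"
| "tsz (Fun f ts) = Suc (Suc (sum_list (map tsz ts)))"

fun csubst :: "('f,'v) ctxt \<Rightarrow> ('v \<Rightarrow> ('f,'v) term) \<Rightarrow> ('f,'v) ctxt" where
  "csubst Hole \<sigma> = Hole"
| "csubst (More f ss C ts) \<sigma> = More f (map (\<lambda>t. subst_apply t \<sigma>) ss) (csubst C \<sigma>) (map (\<lambda>t. subst_apply t \<sigma>) ts)"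

fun ccomp :: "('f,'v) ctxt \<Rightarrow> ('f,'v) ctxt \<Rightarrow> ('f,'v) ctxt" where
  "ccomp Hole D = D"
| "ccomp (More f ss C ts) D = More f ss (ccomp C D) ts"

lemma ctxt_subst: "subst_apply (ctxt_apply C t) \<sigma> = ctxt_apply (csubst C \<sigma>) (subst_apply t \<sigma>)"
  by (induction C) auto

lemma ctxt_comp: "ctxt_apply (ccomp C D) t = ctxt_apply C (ctxt_apply D t)"
  by (induction C) auto

lemma subst_subst: "subst_apply (subst_apply t \<sigma>) \<tau> = subst_apply t (\<lambda>x. subst_apply (\<sigma> x) \<tau>)"
  by (induction t) auto

lemma subst_Var[simp]: "subst_apply t Var = t"
  by (induction t) (auto simp: map_idI)

lemma subst_cong: "(\<And>x. x \<in> vars_term t \<Longrightarrow> \<sigma> x = \<tau> x) \<Longrightarrow> subst_apply t \<sigma> = subst_apply t \<tau>"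
  by (induction t) auto

lemma finite_vars: "finite (vars_term t)"
  by (induction t) auto

lemma vars_subst: "vars_term (subst_apply t \<sigma>) = (\<Union>x\<in>vars_term t. vars_term (\<sigma> x))"
  by (induction t) auto

lemma vars_ctxt_mono: "vars_term t \<subseteq> vars_term s \<Longrightarrow> vars_term (ctxt_apply C t) \<subseteq> vars_term (ctxt_apply C s)"
  by (induction C) auto

lemma vars_ctxt_eq: "vars_term t = vars_term s \<Longrightarrow> vars_term (ctxt_apply C t) = vars_term (ctxt_apply C s)"
  by (induction C) auto

lemma tsz_pos: "tsz t \<ge> 1"
  by (cases t) auto

lemma tsz_ctxt: "tsz (ctxt_apply C t) \<ge> tsz t"
  by (induction C) auto

lemma tsz_ctxt_eq: "tsz (ctxt_apply C t) = tsz t \<Longrightarrow> C = Hole"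
proof (induction C)
  case (More f ss C ts)
  have "tsz (ctxt_apply C t) \<ge> tsz t" by (rule tsz_ctxt)
  then show ?case using More by simp
qed simp

lemma sum_list_le_strict:
  assumes "\<forall>x\<in>set xs. f x \<le> (g x :: nat)" and "\<exists>x\<in>set xs. f x < g x"
  shows "sum_list (map f xs) < sum_list (map g xs)"
  using assms
proof (induction xs)
  case (Cons a xs)
  show ?case
  proof (cases "f a < g a")
    case True
    have "sum_list (map f xs) \<le> sum_list (map g xs)"
      using Cons.prems(1) by (intro sum_list_mono) auto
    then show ?thesis using True by simp
  next
    case False
    then have "sum_list (map f xs) < sum_list (map g xs)"
      using Cons by auto
    then show ?thesis using Cons.prems(1) by simp
  qed
qed simp

lemma tsz_subst: "tsz t \<le> tsz (subst_apply t \<sigma>)"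
proof (induction t)
  case (Var x) then show ?case using tsz_pos[of "\<sigma> x"] by simp
next
  case (Fun f ts)
  have "sum_list (map tsz ts) \<le> sum_list (map (\<lambda>t. tsz (subst_apply t \<sigma>)) ts)"
    using Fun by (intro sum_list_mono) auto
  then show ?case by (simp add: o_def)
qed

lemma tsz_subst_strict: "x \<in> vars_term t \<Longrightarrow> (\<forall>y. \<sigma> x \<noteq> Var y) \<Longrightarrow> tsz t < tsz (subst_apply t \<sigma>)"
proof (induction t)
  case (Var z) then show ?case by (cases "\<sigma> z") auto
next
  case (Fun f ts)
  then obtain t where t: "t \<in> set ts" "x \<in> vars_term t" by auto
  have "sum_list (map tsz ts) < sum_list (map (\<lambda>t. tsz (subst_apply t \<sigma>)) ts)"
    using Fun t tsz_subst by (intro sum_list_le_strict) auto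
  then show ?case by (simp add: o_def)
qed

lemma card_vars_le: "card (vars_term t) \<le> tsz t"
proof (induction t)
  case (Var x) then show ?case by simp
next
  case (Fun f ts)
  have "card (\<Union>t\<in>set ts. vars_term t) \<le> sum_list (map tsz ts)"
    using Fun
  proof (induction ts)
    case (Cons a ts)
    have "card (\<Union>t\<in>set (a#ts). vars_term t) \<le> card (vars_term a) + card (\<Union>t\<in>set ts. vars_term t)"
      by (simp add: card_Un_le)
    also have "\<dots> \<le> tsz a + sum_list (map tsz ts)" using Cons by (intro add_mono) auto
    finally show ?case by simp
  qed simp
  then show ?case by simp
qed

lemma extend_bij:
  fixes g :: "'a \<Rightarrow> 'a"
  assumes "finite A" "inj_on g A"
  shows "\<exists>\<pi>. bij \<pi> \<and> (\<forall>x\<in>A. \<pi> x = g x)"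
  using assms
proof (induction A rule: finite_induct)
  case empty
  then show ?case using bij_id by blast
next
  case (insert a A)
  then obtain \<pi> where p: "bij \<pi>" "\<forall>x\<in>A. \<pi> x = g x" by auto
  define \<pi>' where "\<pi>' = Transposition.transpose (\<pi> a) (g a) \<circ> \<pi>"
  have "bij \<pi>'" unfolding \<pi>'_def using p(1) by (simp add: bij_comp)
  moreover have "\<pi>' x = g x" if "x \<in> insert a A" for x
  proof (cases "x = a")
    case True then show ?thesis by (simp add: \<pi>'_def)
  next
    case False
    then have xA: "x \<in> A" using that by auto
    have "\<pi> x \<noteq> \<pi> a" using p(1) False by (metis bij_pointE)
    moreover have "g x \<noteq> g a" using insert.prems xA insert.hyps False
      by (meson inj_on_contraD insertCI)
    ultimately show ?thesis using p(2) xA by (simp add: \<pi>'_def)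
  qed
  ultimately show ?case by blast
qed



lemma rstepI: "(l,r) \<in> R \<Longrightarrow> s = ctxt_apply C (subst_apply l \<sigma>) \<Longrightarrow> t = ctxt_apply C (subst_apply r \<sigma>) \<Longrightarrow> (s,t) \<in> rstep R"
  unfolding rstep_def by blast

lemma rstepE: "(s,t) \<in> rstep R \<Longrightarrow> (\<And>C l r \<sigma>. (l,r) \<in> R \<Longrightarrow> s = ctxt_apply C (subst_apply l \<sigma>) \<Longrightarrow> t = ctxt_apply C (subst_apply r \<sigma>) \<Longrightarrow> P) \<Longrightarrow> P"
  unfolding rstep_def by blast

lemma rule_rstep: "(l,r) \<in> R \<Longrightarrow> (l,r) \<in> rstep R"
  by (rule rstepI[where C=Hole and \<sigma>=Var]) auto

lemma rstep_ctxt: "(s,t) \<in> rstep R \<Longrightarrow> (ctxt_apply C s, ctxt_apply C t) \<in> rstep R"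
proof (erule rstepE)
  fix C' l r \<sigma> assume "(l,r) \<in> R" "s = ctxt_apply C' (subst_apply l \<sigma>)" "t = ctxt_apply C' (subst_apply r \<sigma>)"
  then show ?thesis by (intro rstepI[where C="ccomp C C'"]) (auto simp: ctxt_comp)
qed

lemma rstep_subst: "(s,t) \<in> rstep R \<Longrightarrow> (subst_apply s \<tau>, subst_apply t \<tau>) \<in> rstep R"
proof (erule rstepE)
  fix C' l r \<sigma> assume "(l,r) \<in> R" "s = ctxt_apply C' (subst_apply l \<sigma>)" "t = ctxt_apply C' (subst_apply r \<sigma>)"
  then show ?thesis
    by (intro rstepI[where C="csubst C' \<tau>" and \<sigma>="\<lambda>x. subst_apply (\<sigma> x) \<tau>"]) (auto simp: ctxt_subst subst_subst)
qed

lemma rstep_mono: "R \<subseteq> S \<Longrightarrow> rstep R \<subseteq> rstep S"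
  unfolding rstep_def by blast

lemma rstep_Un: "rstep (R \<union> S) = rstep R \<union> rstep S"
  unfolding rstep_def by blast

lemma rtrancl_closed:
  assumes "\<And>a b. (a,b) \<in> r \<Longrightarrow> (f a, f b) \<in> r" and "(a,b) \<in> r\<^sup>*"
  shows "(f a, f b) \<in> r\<^sup>*"
  using assms(2) by induction (auto intro: rtrancl_into_rtrancl assms(1))

lemma conv_closed:
  assumes "\<And>a b. (a,b) \<in> rstep E \<Longrightarrow> (f a, f b) \<in> rstep E" and "(a,b) \<in> conv E"
  shows "(f a, f b) \<in> conv E"
proof -
  have "(f a, f b) \<in> (rstep E \<union> (rstep E)\<inverse>)\<^sup>*"
    by (rule rtrancl_closed[OF _ assms(2)[unfolded conv_def]]) (auto dest: assms(1))
  then show ?thesis unfolding conv_def .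
qed

lemma conv_ctxt: "(s,t) \<in> conv E \<Longrightarrow> (ctxt_apply C s, ctxt_apply C t) \<in> conv E"
  by (rule conv_closed[OF rstep_ctxt])
lemma conv_subst: "(s,t) \<in> conv E \<Longrightarrow> (subst_apply s \<tau>, subst_apply t \<tau>) \<in> conv E"
  by (rule conv_closed[OF rstep_subst])

lemma relto_ctxt: "(s,t) \<in> relto R B \<Longrightarrow> (ctxt_apply C s, ctxt_apply C t) \<in> relto R B"
proof -
  assume "(s,t) \<in> relto R B"
  then obtain a b where "(s,a) \<in> conv B" "(a,b) \<in> rstep R" "(b,t) \<in> conv B"
    unfolding relto_def by blast
  then show ?thesis unfolding relto_def
    using conv_ctxt[of s a B C] rstep_ctxt[of a b R C] conv_ctxt[of b t B C] by blast
qed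
lemma relto_subst: "(s,t) \<in> relto R B \<Longrightarrow> (subst_apply s \<tau>, subst_apply t \<tau>) \<in> relto R B"
proof -
  assume "(s,t) \<in> relto R B"
  then obtain a b where "(s,a) \<in> conv B" "(a,b) \<in> rstep R" "(b,t) \<in> conv B"
    unfolding relto_def by blast
  then show ?thesis unfolding relto_def
    using conv_subst[of s a B \<tau>] rstep_subst[of a b R \<tau>] conv_subst[of b t B \<tau>] by blast
qed
lemma relto_rt_ctxt: "(s,t) \<in> (relto R B)\<^sup>* \<Longrightarrow> (ctxt_apply C s, ctxt_apply C t) \<in> (relto R B)\<^sup>*"
  by (rule rtrancl_closed[OF relto_ctxt])
lemma relto_rt_subst: "(s,t) \<in> (relto R B)\<^sup>* \<Longrightarrow> (subst_apply s \<tau>, subst_apply t \<tau>) \<in> (relto R B)\<^sup>*"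
  by (rule rtrancl_closed[OF relto_subst])

lemma conv_refl[simp]: "(s,s) \<in> conv E"
  unfolding conv_def by simp
lemma conv_sym: "(a,b) \<in> conv E \<Longrightarrow> (b,a) \<in> conv E"
  unfolding conv_def
  by (metis converse_Un converse_converse rtrancl_converseI sup_commute)
lemma conv_trans: "(a,b) \<in> conv E \<Longrightarrow> (b,c) \<in> conv E \<Longrightarrow> (a,c) \<in> conv E"
  unfolding conv_def by (rule rtrancl_trans)
lemma rstep_conv: "(a,b) \<in> rstep E \<Longrightarrow> (a,b) \<in> conv E"
  unfolding conv_def by auto
lemma conv_subset:
  assumes "rstep S \<subseteq> conv E" shows "conv S \<subseteq> conv E"
proof
  fix p assume "p \<in> conv S"
  then obtain a b where p: "p = (a,b)" "(a,b) \<in> (rstep S \<union> (rstep S)\<inverse>)\<^sup>*"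
    unfolding conv_def by (cases p) auto
  from p(2) have "(a,b) \<in> conv E"
  proof induction
    case base then show ?case by simp
  next
    case (step y z)
    from step(2) have "(y,z) \<in> conv E"
    proof
      assume "(y,z) \<in> rstep S" then show ?thesis using assms by auto
    next
      assume "(y,z) \<in> (rstep S)\<inverse>"
      then have "(z,y) \<in> conv E" using assms by auto
      then show ?thesis by (rule conv_sym)
    qed
    with step(3) show ?case by (rule conv_trans)
  qed
  then show "p \<in> conv E" using p by simp
qed

lemma conv_mono: "R \<subseteq> S \<Longrightarrow> conv R \<subseteq> conv S"
proof -
  assume "R \<subseteq> S"
  then have "rstep R \<subseteq> rstep S" by (rule rstep_mono)
  also have "\<dots> \<subseteq> conv S" using rstep_conv by auto
  finally show ?thesis by (rule conv_subset)
qed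

lemma rstep_relto: "rstep R \<subseteq> relto R B"
proof
  fix p assume "p \<in> rstep R"
  moreover obtain a b where "p = (a,b)" by (cases p)
  ultimately show "p \<in> relto R B" unfolding relto_def
    using conv_refl[of a B] conv_refl[of b B] by blast
qed

lemma relto_conv: "relto R B \<subseteq> conv (R \<union> B)"
proof -
  have "conv B \<subseteq> conv (R \<union> B)" by (rule conv_mono) auto
  moreover have "rstep R \<subseteq> conv (R \<union> B)" using rstep_mono[of R "R \<union> B"] rstep_conv[of _ _ "R \<union> B"] by auto
  ultimately show ?thesis unfolding relto_def
  proof (intro subsetI)
    fix p assume A: "conv B \<subseteq> conv (R \<union> B)" "rstep R \<subseteq> conv (R \<union> B)" and "p \<in> conv B O rstep R O conv B"
    then obtain s a b t where "p = (s,t)" "(s,a) \<in> conv B" "(a,b) \<in> rstep R" "(b,t) \<in> conv B" by blast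
    then show "p \<in> conv (R \<union> B)" using A conv_trans[of s a "R \<union> B" b] conv_trans[of s b "R \<union> B" t] by blast
  qed
qed

lemma relto_rt_conv: "(a,b) \<in> (relto R B)\<^sup>* \<Longrightarrow> (a,b) \<in> conv (R \<union> B)"
proof (induction rule: rtrancl_induct)
  case (step y z)
  then show ?case using relto_conv[of R B] conv_trans[of a y "R \<union> B" z] by auto
qed simp

lemma SN_wf: "SN_rel r \<longleftrightarrow> wf (r\<inverse>)"
  unfolding SN_rel_def wf_iff_no_infinite_down_chain by simp

lemma NF_rtrancl: "(s,t) \<in> r\<^sup>* \<Longrightarrow> s \<in> NF r \<Longrightarrow> t = s"
  by (erule converse_rtranclE) (auto simp: NF_def)

lemma NF_mono: "r \<subseteq> s \<Longrightarrow> NF s \<subseteq> NF r"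
  unfolding NF_def by blast

lemma nf_exists:
  assumes "wf (r\<inverse>)" shows "\<exists>t. (s,t) \<in> normalizability r"
  using assms
proof (induction s rule: wf_induct_rule)
  case (less s)
  show ?case
  proof (cases "s \<in> NF r")
    case True then show ?thesis unfolding normalizability_def by auto
  next
    case False
    then obtain s' where "(s,s') \<in> r" unfolding NF_def by auto
    with less obtain t where "(s',t) \<in> normalizability r" by auto
    with \<open>(s,s') \<in> r\<close> show ?thesis unfolding normalizability_def
      by (auto intro: converse_rtrancl_into_rtrancl)
  qed
qed



lemma match_trans:
  assumes "l = ctxt_apply C1 (subst_apply l' \<sigma>1)"
  shows "\<exists>C \<sigma>. ctxt_apply C0 (subst_apply l \<sigma>0) = ctxt_apply C (subst_apply l' \<sigma>)"
  using assms
  by (intro exI[of _ "ccomp C0 (csubst C1 \<sigma>0)"] exI[of _ "\<lambda>x. subst_apply (\<sigma>1 x) \<sigma>0"])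
     (simp add: ctxt_comp ctxt_subst subst_subst)

lemma rename_inv:
  assumes "bij \<pi>"
  shows "subst_apply (subst_apply t (\<lambda>x. Var (\<pi> x))) (\<lambda>x. Var (inv \<pi> x)) = t"
  using assms by (simp add: subst_subst bij_is_inj)

lemma rt_conv: assumes A: "rstep S \<subseteq> conv E" and ab: "(a,b) \<in> (rstep S)\<^sup>*" shows "(a,b) \<in> conv E"
  using ab
  proof (induction rule: rtrancl_induct)
    case (step y z)
    then have "(y,z) \<in> conv E" using A by auto
    with step(3) show ?case by (rule conv_trans)
  qed simp

lemma relto_E: "(s,x) \<in> conv B \<Longrightarrow> (x,y) \<in> relto R B \<Longrightarrow> (y,t) \<in> conv B \<Longrightarrow> (s,t) \<in> relto R B"
proof -
  assume a: "(s,x) \<in> conv B" "(x,y) \<in> relto R B" "(y,t) \<in> conv B"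
  then obtain c d where "(x,c) \<in> conv B" "(c,d) \<in> rstep R" "(d,y) \<in> conv B" unfolding relto_def by blast
  moreover have "(s,c) \<in> conv B" using a(1) \<open>(x,c) \<in> conv B\<close> by (rule conv_trans)
  moreover have "(d,t) \<in> conv B" using \<open>(d,y) \<in> conv B\<close> a(3) by (rule conv_trans)
  ultimately show ?thesis unfolding relto_def by blast
qed

lemma relto_trancl_E:
  assumes "(x,y) \<in> (relto R B)\<^sup>+"
  shows "(s,x) \<in> conv B \<Longrightarrow> (y,t) \<in> conv B \<Longrightarrow> (s,t) \<in> (relto R B)\<^sup>+"
  using assms
proof (induction arbitrary: t rule: trancl_induct)
  case (base y)
  then show ?case using relto_E by blast
next
  case (step y z)
  have "(s,y) \<in> (relto R B)\<^sup>+" using step(3)[OF step(4) conv_refl] .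
  moreover have "(y,t) \<in> relto R B" using relto_E[OF conv_refl step(2) step(5)] .
  ultimately show ?case by (rule trancl_into_trancl)
qed

lemma NF_trancl: "NF r \<subseteq> NF (r\<^sup>+)"
  unfolding NF_def by (auto dest: tranclD)

locale thm_ctx =
  fixes R B D :: "('f,'v) trs" and nf :: "('f,'v) term \<Rightarrow> ('f,'v) term"
  assumes B_vars: "\<forall>(l, r) \<in> B. vars_term l = vars_term r"
    and R_trs: "wf_trs R"
    and complete: "complete_mod R B"
    and nfc: "nf_choice R B nf"
    and reps: "is_variant_reps B {(l, nf r) | l r. (l, r) \<in> R} D"
begin

lemma SN_R: "wf ((relto R B)\<inverse>)"
  using complete SN_wf unfolding complete_mod_def terminating_mod_def by auto

lemma CR: "CR_mod R B" using complete unfolding complete_mod_def by auto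

lemma nf_rt: "(t, nf t) \<in> (relto R B)\<^sup>*" and nf_NF: "nf t \<in> NF (relto R B)"
  using nfc unfolding nf_choice_def by auto

lemma NF_relto_rstep: "NF (relto R B) \<subseteq> NF (rstep R)"
  by (rule NF_mono[OF rstep_relto])

lemma D_elem: "(l,r) \<in> D \<Longrightarrow> \<exists>r0. (l,r0) \<in> R \<and> r = nf r0"
  using reps unfolding is_variant_reps_def by blast

lemma uniq: "\<rho>1 \<in> D \<Longrightarrow> \<rho>2 \<in> D \<Longrightarrow> right_variant B \<rho>1 \<rho>2 \<Longrightarrow> \<rho>1 = \<rho>2"
  using reps unfolding is_variant_reps_def by blast

lemma cover: "(l,r) \<in> R \<Longrightarrow> \<exists>\<rho>' \<in> D. right_variant B (l, nf r) \<rho>'"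
  using reps unfolding is_variant_reps_def by blast

lemma cr_nf:
  assumes "(s,t) \<in> conv (R \<union> B)" "s \<in> NF (rstep R)" "t \<in> NF (rstep R)"
  shows "(s,t) \<in> conv B"
proof -
  from CR assms(1) obtain s' t' where a: "(s,s') \<in> (rstep R)\<^sup>*" "(s',t') \<in> conv B" "(t',t) \<in> ((rstep R)\<inverse>)\<^sup>*"
    unfolding CR_mod_def by blast
  have "(t,t') \<in> (rstep R)\<^sup>*" using a(3) by (rule rtrancl_converseD)
  then have "t' = t" using assms(3) by (rule NF_rtrancl)
  moreover have "s' = s" using a(1) assms(2) by (rule NF_rtrancl)
  ultimately show ?thesis using a(2) by simp
qed

lemma rstepR_conv: "(a,b) \<in> rstep R \<Longrightarrow> (a,b) \<in> conv (R \<union> B)"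
  using rstep_mono[of R "R \<union> B"] rstep_conv by blast

lemma NF_rename:
  assumes "bij \<pi>" "t \<in> NF (relto R B)"
  shows "subst_apply t (\<lambda>x. Var (\<pi> x)) \<in> NF (relto R B)"
proof -
  have "False" if "(subst_apply t (\<lambda>x. Var (\<pi> x)), u) \<in> relto R B" for u
  proof -
    have "(subst_apply (subst_apply t (\<lambda>x. Var (\<pi> x))) (\<lambda>x. Var (inv \<pi> x)), subst_apply u (\<lambda>x. Var (inv \<pi> x))) \<in> relto R B"
      using that by (rule relto_subst)
    then have "(t, subst_apply u (\<lambda>x. Var (inv \<pi> x))) \<in> relto R B"
      by (simp only: rename_inv[OF assms(1)])
    then show False using assms(2) unfolding NF_def by blast
  qed
  then show ?thesis unfolding NF_def by blast
qed

lemma variant_eq: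
  assumes "\<rho>1 \<in> D" "\<rho>2 \<in> D" "bij \<pi>" "subst_apply (fst \<rho>1) (\<lambda>x. Var (\<pi> x)) = fst \<rho>2"
  shows "\<rho>1 = \<rho>2"
proof -
  obtain l1 r1 l2 r2 where r: "\<rho>1 = (l1, nf r1)" "(l1,r1) \<in> R" "\<rho>2 = (l2, nf r2)" "(l2,r2) \<in> R"
    using assms(1,2) D_elem by (metis prod.collapse)
  define \<sigma> where "\<sigma> = (\<lambda>x. Var (\<pi> x) :: ('f,'v) term)"
  have l2: "l2 = subst_apply l1 \<sigma>" using assms(4) r unfolding \<sigma>_def by simp
  have c1: "(l2, r2) \<in> conv (R \<union> B)" using r(4) by (intro rstepR_conv rule_rstep)
  have c2: "(l2, subst_apply r1 \<sigma>) \<in> conv (R \<union> B)"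
    unfolding l2 by (intro rstepR_conv rstep_subst rule_rstep r(2))
  have c3: "(subst_apply r1 \<sigma>, subst_apply (nf r1) \<sigma>) \<in> conv (R \<union> B)"
    by (intro conv_subst relto_rt_conv nf_rt)
  have c4: "(r2, nf r2) \<in> conv (R \<union> B)" by (intro relto_rt_conv nf_rt)
  have "(subst_apply (nf r1) \<sigma>, l2) \<in> conv (R \<union> B)"
    using conv_trans[OF c2 c3] by (rule conv_sym)
  then have "(subst_apply (nf r1) \<sigma>, nf r2) \<in> conv (R \<union> B)"
    using conv_trans[OF c1 c4] by (rule conv_trans)
  moreover have "subst_apply (nf r1) \<sigma> \<in> NF (rstep R)"
    using NF_rename[OF assms(3) nf_NF] NF_relto_rstep unfolding \<sigma>_def by blast
  moreover have "nf r2 \<in> NF (rstep R)" using nf_NF NF_relto_rstep by blast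
  ultimately have "(subst_apply (nf r1) \<sigma>, nf r2) \<in> conv B" by (rule cr_nf)
  then have "right_variant B \<rho>1 \<rho>2"
    unfolding right_variant_def renaming_def using r l2 assms(3) unfolding \<sigma>_def by auto
  then show ?thesis by (rule uniq[OF assms(1,2)])
qed

lemma core:
  "(l,r) \<in> D \<Longrightarrow> \<exists>l'' r'' C \<sigma>. (l'',r'') \<in> Rddot D \<and> l = ctxt_apply C (subst_apply l'' \<sigma>)"
proof (induction l arbitrary: r rule: wf_induct_rule[OF wf_measures[of "[tsz, \<lambda>l. tsz l - card (vars_term l)]"]])
  case (1 l r)
  show ?case
  proof (cases "(l,r) \<in> Rddot D")
    case True then show ?thesis
      by (intro exI[of _ l] exI[of _ r] exI[of _ Hole] exI[of _ Var]) simp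
  next
    case False
    then have "l \<notin> NF (rstep (D - {(l,r)}))" using "1.prems" unfolding Rddot_def by auto
    then obtain u where "(l,u) \<in> rstep (D - {(l,r)})" unfolding NF_def by auto
    then obtain C l' r' \<sigma> where lr': "(l',r') \<in> D" "(l',r') \<noteq> (l,r)"
      and l: "l = ctxt_apply C (subst_apply l' \<sigma>)" by (elim rstepE) auto
    have s1: "tsz (subst_apply l' \<sigma>) \<le> tsz l" using l tsz_ctxt by metis
    have s2: "tsz l' \<le> tsz (subst_apply l' \<sigma>)" by (rule tsz_subst)
    show ?thesis
    proof (cases "(l', l) \<in> measures [tsz, \<lambda>l. tsz l - card (vars_term l)]")
      case True
      from "1.IH"[OF True lr'(1)] obtain l'' r'' C' \<sigma>' where
        "(l'',r'') \<in> Rddot D" "l' = ctxt_apply C' (subst_apply l'' \<sigma>')" by blast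
      moreover from match_trans[OF this(2), of C \<sigma>] obtain C2 \<sigma>2 where
        "ctxt_apply C (subst_apply l' \<sigma>) = ctxt_apply C2 (subst_apply l'' \<sigma>2)" by blast
      ultimately show ?thesis using l by blast
    next
      case False
      then have eq: "tsz l' = tsz l"
        and cardle: "\<not> (tsz l' - card (vars_term l') < tsz l - card (vars_term l))"
        using s1 s2 by auto
      have "tsz (ctxt_apply C (subst_apply l' \<sigma>)) = tsz (subst_apply l' \<sigma>)"
        using s1 s2 eq l by simp
      then have CH: "C = Hole" by (rule tsz_ctxt_eq)
      have isv: "\<exists>y. \<sigma> x = Var y" if "x \<in> vars_term l'" for x
        using tsz_subst_strict[OF that, of \<sigma>] s1 s2 eq by force
      define g where "g x = (THE y. \<sigma> x = Var y)" for x
      have sg: "\<sigma> x = Var (g x)" if "x \<in> vars_term l'" for x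
        using isv[OF that] unfolding g_def by auto
      have ll: "l = subst_apply l' \<sigma>" using l CH by simp
      have vl: "vars_term l = g ` vars_term l'"
        unfolding ll vars_subst using sg by auto
      have c1: "card (vars_term l) \<le> card (vars_term l')"
        unfolding vl by (rule card_image_le[OF finite_vars])
      have c2: "card (vars_term l') \<le> tsz l'" by (rule card_vars_le)
      have "card (vars_term l) = card (vars_term l')"
        using c1 c2 cardle eq by linarith
      then have "card (g ` vars_term l') = card (vars_term l')" using vl by simp
      then have "inj_on g (vars_term l')" by (rule eq_card_imp_inj_on[OF finite_vars])
      then obtain \<pi> where \<pi>: "bij \<pi>" "\<forall>x\<in>vars_term l'. \<pi> x = g x"
        using extend_bij[OF finite_vars] by blast
      have "subst_apply l' (\<lambda>x. Var (\<pi> x)) = subst_apply l' \<sigma>"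
        by (rule subst_cong) (use \<pi> sg in auto)
      then have "subst_apply (fst (l',r')) (\<lambda>x. Var (\<pi> x)) = fst (l,r)" using ll by simp
      from variant_eq[OF lr'(1) "1.prems" \<pi>(1) this] lr'(2) show ?thesis by simp
    qed
  qed
qed

end


context thm_ctx begin

abbreviation "Rd \<equiv> Rddot D"

lemma Rd_D: "Rd \<subseteq> D" unfolding Rddot_def by auto

lemma Rd_step: "(s,t) \<in> rstep Rd \<Longrightarrow> (s,t) \<in> (relto R B)\<^sup>+"
proof (erule rstepE)
  fix C l r \<sigma> assume a: "(l,r) \<in> Rd" "s = ctxt_apply C (subst_apply l \<sigma>)" "t = ctxt_apply C (subst_apply r \<sigma>)"
  then obtain r0 where r0: "(l,r0) \<in> R" "r = nf r0" using D_elem Rd_D by blast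
  have "(s, ctxt_apply C (subst_apply r0 \<sigma>)) \<in> relto R B"
    using rstepI[OF r0(1) a(2) refl] rstep_relto by blast
  moreover have "(ctxt_apply C (subst_apply r0 \<sigma>), t) \<in> (relto R B)\<^sup>*"
    unfolding a(3) r0(2) by (intro relto_rt_ctxt relto_rt_subst nf_rt)
  ultimately show ?thesis by (rule rtrancl_into_trancl2)
qed

lemma trancl_conv: "(s,t) \<in> (relto R B)\<^sup>+ \<Longrightarrow> (s,t) \<in> conv (R \<union> B)"
  by (intro relto_rt_conv trancl_into_rtrancl)

lemma Rd_conv: "rstep Rd \<subseteq> conv (R \<union> B)"
proof (rule subrelI)
  fix a b assume "(a,b) \<in> rstep Rd"
  then show "(a,b) \<in> conv (R \<union> B)" by (intro trancl_conv Rd_step)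
qed

lemma relto_Rd: "(s,t) \<in> relto Rd B \<Longrightarrow> (s,t) \<in> (relto R B)\<^sup>+"
proof -
  assume "(s,t) \<in> relto Rd B"
  then obtain a b where "(s,a) \<in> conv B" "(a,b) \<in> rstep Rd" "(b,t) \<in> conv B" unfolding relto_def by blast
  then show ?thesis using relto_trancl_E Rd_step by blast
qed

lemma SN_Rd: "wf ((relto Rd B)\<inverse>)"
proof -
  have "wf (((relto R B)\<inverse>)\<^sup>+)" using SN_R by (rule wf_trancl)
  moreover have "(relto Rd B)\<inverse> \<subseteq> ((relto R B)\<inverse>)\<^sup>+"
    using relto_Rd by (auto simp: trancl_converse)
  ultimately show ?thesis by (rule wf_subset)
qed

lemma SN_rstep_Rd: "wf ((rstep Rd)\<inverse>)"
  using SN_Rd by (rule wf_subset) (use rstep_relto in auto)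

lemma SN_rstep_R: "wf ((rstep R)\<inverse>)"
  using SN_R by (rule wf_subset) (use rstep_relto in auto)

lemma NF_eq: "NF (rstep Rd) = NF (rstep R)"
proof
  show "NF (rstep R) \<subseteq> NF (rstep Rd)"
  proof
    fix t assume tN: "t \<in> NF (rstep R)"
    show "t \<in> NF (rstep Rd)"
    proof (rule ccontr)
      assume "t \<notin> NF (rstep Rd)"
      then obtain u where "(t,u) \<in> rstep Rd" unfolding NF_def by auto
      then obtain C l r \<sigma> where a: "(l,r) \<in> Rd" "t = ctxt_apply C (subst_apply l \<sigma>)" by (elim rstepE) auto
      then obtain r0 where r0: "(l,r0) \<in> R" using D_elem Rd_D by blast
      have "(t, ctxt_apply C (subst_apply r0 \<sigma>)) \<in> rstep R" by (rule rstepI[OF r0 a(2) refl])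
      then show False using tN unfolding NF_def by auto
    qed
  qed
next
  show "NF (rstep Rd) \<subseteq> NF (rstep R)"
  proof
    fix t assume tN: "t \<in> NF (rstep Rd)"
    show "t \<in> NF (rstep R)"
    proof (rule ccontr)
      assume "t \<notin> NF (rstep R)"
      then obtain u where "(t,u) \<in> rstep R" unfolding NF_def by auto
      then obtain C l r \<sigma> where a: "(l,r) \<in> R" "t = ctxt_apply C (subst_apply l \<sigma>)" by (elim rstepE) auto
      obtain \<rho>' where \<rho>': "\<rho>' \<in> D" "right_variant B (l, nf r) \<rho>'" using cover[OF a(1)] by blast
      then obtain \<pi> where \<pi>: "bij \<pi>" "subst_apply l (\<lambda>x. Var (\<pi> x)) = fst \<rho>'"
        unfolding right_variant_def renaming_def by auto
      have "l = ctxt_apply Hole (subst_apply (fst \<rho>') (\<lambda>x. Var (inv \<pi> x)))"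
        using rename_inv[OF \<pi>(1), of l] \<pi>(2) by simp
      from match_trans[OF this, of C \<sigma>] a(2) obtain C1 \<sigma>1 where
        t1: "t = ctxt_apply C1 (subst_apply (fst \<rho>') \<sigma>1)" by auto
      obtain l'' r'' C' \<sigma>' where c: "(l'',r'') \<in> Rd" "fst \<rho>' = ctxt_apply C' (subst_apply l'' \<sigma>')"
        using core[of "fst \<rho>'" "snd \<rho>'"] \<rho>'(1) by auto
      from match_trans[OF c(2), of C1 \<sigma>1] t1 obtain C2 \<sigma>2 where
        "t = ctxt_apply C2 (subst_apply l'' \<sigma>2)" by auto
      then have "(t, ctxt_apply C2 (subst_apply r'' \<sigma>2)) \<in> rstep Rd" by (rule rstepI[OF c(1) _ refl])
      then show False using tN unfolding NF_def by auto
    qed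
  qed
qed

lemma rtRd_conv: "(a,b) \<in> (rstep Rd)\<^sup>* \<Longrightarrow> (a,b) \<in> conv (R \<union> B)"
  by (rule rt_conv[OF Rd_conv])
lemma rtR_conv: "(a,b) \<in> (rstep R)\<^sup>* \<Longrightarrow> (a,b) \<in> conv (R \<union> B)"
  by (rule rt_conv) (use rstepR_conv in auto)

lemma B_conv: "(a,b) \<in> conv B \<Longrightarrow> (a,b) \<in> conv (S \<union> B)"
  using conv_mono[of B "S \<union> B"] by auto

lemma NEQ: "normalizability (rstep Rd) O conv B = normalizability (rstep R) O conv B"
proof (intro equalityI subsetI)
  fix p assume "p \<in> normalizability (rstep Rd) O conv B"
  then obtain s t u where p: "p = (s,u)" "(s,t) \<in> (rstep Rd)\<^sup>*" "t \<in> NF (rstep Rd)" "(t,u) \<in> conv B"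
    unfolding normalizability_def by auto
  obtain t' where t': "(s,t') \<in> normalizability (rstep R)" using nf_exists[OF SN_rstep_R] by blast
  then have "(s,t') \<in> conv (R \<union> B)" "t' \<in> NF (rstep R)" unfolding normalizability_def
    using rtR_conv by auto
  moreover have "(s,t) \<in> conv (R \<union> B)" using p(2) by (rule rtRd_conv)
  ultimately have "(t',t) \<in> conv (R \<union> B)" using conv_sym conv_trans by metis
  then have "(t',t) \<in> conv B" using cr_nf \<open>t' \<in> NF (rstep R)\<close> p(3) NF_eq by blast
  then have "(t',u) \<in> conv B" using p(4) by (rule conv_trans)
  then show "p \<in> normalizability (rstep R) O conv B" using t' p(1) by blast
next
  fix p assume "p \<in> normalizability (rstep R) O conv B"
  then obtain s t u where p: "p = (s,u)" "(s,t) \<in> (rstep R)\<^sup>*" "t \<in> NF (rstep R)" "(t,u) \<in> conv B"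
    unfolding normalizability_def by auto
  obtain t' where t': "(s,t') \<in> normalizability (rstep Rd)" using nf_exists[OF SN_rstep_Rd] by blast
  then have "(s,t') \<in> conv (R \<union> B)" "t' \<in> NF (rstep R)" unfolding normalizability_def
    using rtRd_conv NF_eq by auto
  moreover have "(s,t) \<in> conv (R \<union> B)" using p(2) by (rule rtR_conv)
  ultimately have "(t',t) \<in> conv (R \<union> B)" using conv_sym conv_trans by metis
  then have "(t',t) \<in> conv B" using cr_nf \<open>t' \<in> NF (rstep R)\<close> p(3) by blast
  then have "(t',u) \<in> conv B" using p(4) by (rule conv_trans)
  then show "p \<in> normalizability (rstep Rd) O conv B" using t' p(1) by blast
qed

end


context thm_ctx begin

lemma conv_le: "conv (Rd \<union> B) \<subseteq> conv (R \<union> B)"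
proof (rule conv_subset)
  show "rstep (Rd \<union> B) \<subseteq> conv (R \<union> B)"
    unfolding rstep_Un
  proof (rule Un_least[OF Rd_conv])
    have "rstep B \<subseteq> conv B" using rstep_conv[of _ _ B] by (rule subrelI)
    then show "rstep B \<subseteq> conv (R \<union> B)" using conv_mono[of B "R \<union> B"] by (rule order_trans) auto
  qed
qed

lemma conv_ge: "conv (R \<union> B) \<subseteq> conv (Rd \<union> B)"
proof (rule conv_subset)
  have rd: "(a,b) \<in> (rstep Rd)\<^sup>* \<Longrightarrow> (a,b) \<in> conv (Rd \<union> B)" for a b
  proof (rule rt_conv)
    show "rstep Rd \<subseteq> conv (Rd \<union> B)"
      using rstep_mono[of Rd "Rd \<union> B"] rstep_conv[of _ _ "Rd \<union> B"] by auto
  qed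
  have "(s,t) \<in> conv (Rd \<union> B)" if st: "(s,t) \<in> rstep R" for s t
  proof -
    obtain t' where t': "(t,t') \<in> normalizability (rstep R)" using nf_exists[OF SN_rstep_R] by blast
    then have s': "(s,t') \<in> normalizability (rstep R)" using st unfolding normalizability_def
      by (auto intro: converse_rtrancl_into_rtrancl)
    have "(s,t') \<in> normalizability (rstep R) O conv B" using s' conv_refl[of t' B] by (rule relcompI)
    then have "(s,t') \<in> normalizability (rstep Rd) O conv B" by (simp only: NEQ)
    then obtain s1 where s1: "(s,s1) \<in> (rstep Rd)\<^sup>*" "(s1,t') \<in> conv B"
      unfolding normalizability_def by auto
    have "(t,t') \<in> normalizability (rstep R) O conv B" using t' conv_refl[of t' B] by (rule relcompI)
    then have "(t,t') \<in> normalizability (rstep Rd) O conv B" by (simp only: NEQ)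
    then obtain t1 where t1: "(t,t1) \<in> (rstep Rd)\<^sup>*" "(t1,t') \<in> conv B"
      unfolding normalizability_def by auto
    have "(s,t') \<in> conv (Rd \<union> B)" using conv_trans[OF rd[OF s1(1)] B_conv[OF s1(2)]] .
    moreover have "(t',t) \<in> conv (Rd \<union> B)" using conv_sym[OF conv_trans[OF rd[OF t1(1)] B_conv[OF t1(2)]]] .
    ultimately show ?thesis by (rule conv_trans)
  qed
  moreover have "(s,t) \<in> conv (Rd \<union> B)" if "(s,t) \<in> rstep B" for s t
    using B_conv[OF rstep_conv[OF that]] .
  ultimately show "rstep (R \<union> B) \<subseteq> conv (Rd \<union> B)" unfolding rstep_Un by (intro Un_least subrelI)
qed

lemma CR_Rd: "CR_mod Rd B"
  unfolding CR_mod_def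
proof (rule subrelI)
  fix s t assume "(s,t) \<in> conv (Rd \<union> B)"
  then have st: "(s,t) \<in> conv (R \<union> B)" using conv_le by blast
  obtain s' where s': "(s,s') \<in> normalizability (rstep Rd)" using nf_exists[OF SN_rstep_Rd] by blast
  obtain t' where t': "(t,t') \<in> normalizability (rstep Rd)" using nf_exists[OF SN_rstep_Rd] by blast
  have a: "(s,s') \<in> (rstep Rd)\<^sup>*" "s' \<in> NF (rstep R)" "(t,t') \<in> (rstep Rd)\<^sup>*" "t' \<in> NF (rstep R)"
    using s' t' NF_eq unfolding normalizability_def by auto
  have "(s',t') \<in> conv (R \<union> B)"
    using conv_trans[OF conv_trans[OF conv_sym[OF rtRd_conv[OF a(1)]] st] rtRd_conv[OF a(3)]] .
  then have "(s',t') \<in> conv B" using cr_nf a by blast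
  moreover have "(t',t) \<in> ((rstep Rd)\<inverse>)\<^sup>*" using a(3) by (rule rtrancl_converseI)
  ultimately show "(s,t) \<in> (rstep Rd)\<^sup>* O conv B O ((rstep Rd)\<inverse>)\<^sup>*" using a(1) by blast
qed

lemma left_red: "left_reduced Rd"
  unfolding left_reduced_def
proof (intro ballI, clarify)
  fix l r assume "(l,r) \<in> Rd"
  then have "l \<in> NF (rstep (D - {(l,r)}))" unfolding Rddot_def by auto
  moreover have "rstep (Rd - {(l,r)}) \<subseteq> rstep (D - {(l,r)})" using Rd_D by (intro rstep_mono) auto
  then have "NF (rstep (D - {(l,r)})) \<subseteq> NF (rstep (Rd - {(l,r)}))" by (rule NF_mono)
  ultimately show "l \<in> NF (rstep (Rd - {(l,r)}))" by (rule rev_subsetD)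
qed

lemma right_red: "right_reduced_mod Rd B"
  unfolding right_reduced_mod_def
proof (intro ballI, clarify)
  fix l r assume "(l,r) \<in> Rd"
  then obtain r0 where "r = nf r0" using D_elem Rd_D by blast
  then have "r \<in> NF ((relto R B)\<^sup>+)" using nf_NF[of r0] NF_trancl[of "relto R B"] by auto
  moreover have "relto Rd B \<subseteq> (relto R B)\<^sup>+" using relto_Rd by (rule subrelI)
  then have "NF ((relto R B)\<^sup>+) \<subseteq> NF (relto Rd B)" by (rule NF_mono)
  ultimately show "r \<in> NF (relto Rd B)" by (rule rev_subsetD)
qed

lemma vars_convB: "(a,b) \<in> conv B \<Longrightarrow> vars_term b = vars_term a"
proof -
  have step: "vars_term y = vars_term x" if "(x,y) \<in> rstep B" for x y
    using that
  proof (elim rstepE)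
    fix C l r \<sigma> assume a: "(l,r) \<in> B" "x = ctxt_apply C (subst_apply l \<sigma>)" "y = ctxt_apply C (subst_apply r \<sigma>)"
    have "vars_term r = vars_term l" using B_vars a(1) by auto
    then have "vars_term (subst_apply r \<sigma>) = vars_term (subst_apply l \<sigma>)"
      unfolding vars_subst by simp
    then show ?thesis unfolding a(2,3) by (rule vars_ctxt_eq)
  qed
  assume "(a,b) \<in> conv B"
  then show ?thesis unfolding conv_def
    by (induction rule: rtrancl_induct) (auto dest: step)
qed

lemma vars_rstepR: "(a,b) \<in> rstep R \<Longrightarrow> vars_term b \<subseteq> vars_term a"
proof (elim rstepE)
  fix C l r \<sigma> assume a: "(l,r) \<in> R" "a = ctxt_apply C (subst_apply l \<sigma>)" "b = ctxt_apply C (subst_apply r \<sigma>)"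
  then have "vars_term r \<subseteq> vars_term l" using R_trs unfolding wf_trs_def by auto
  then have "vars_term (subst_apply r \<sigma>) \<subseteq> vars_term (subst_apply l \<sigma>)"
    unfolding vars_subst by auto
  then show ?thesis unfolding a(2,3) by (rule vars_ctxt_mono)
qed

lemma vars_relto: "(a,b) \<in> (relto R B)\<^sup>* \<Longrightarrow> vars_term b \<subseteq> vars_term a"
proof (induction rule: rtrancl_induct)
  case (step y z)
  then obtain c d where "(y,c) \<in> conv B" "(c,d) \<in> rstep R" "(d,z) \<in> conv B" unfolding relto_def by blast
  then have "vars_term z \<subseteq> vars_term y" using vars_convB vars_rstepR by fastforce
  then show ?case using step by auto
qed simp

lemma wf_Rd: "wf_trs Rd"
  unfolding wf_trs_def
proof (intro ballI, clarify)
  fix l r assume "(l,r) \<in> Rd"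
  then obtain r0 where r0: "(l,r0) \<in> R" "r = nf r0" using D_elem Rd_D by blast
  then have "(\<forall>x. l \<noteq> Var x) \<and> vars_term r0 \<subseteq> vars_term l" using R_trs unfolding wf_trs_def by auto
  moreover have "vars_term r \<subseteq> vars_term r0" unfolding r0(2) by (rule vars_relto[OF nf_rt])
  ultimately show "(\<forall>x. l \<noteq> Var x) \<and> vars_term r \<subseteq> vars_term l" by auto
qed

lemma main:
  "wf_trs Rd \<and> normalization_equivalent_mod Rd R B \<and> conversion_equivalent_mod Rd R B \<and> canonical_mod Rd B"
proof (intro conjI)
  show "wf_trs Rd" by (rule wf_Rd)
  show "normalization_equivalent_mod Rd R B" unfolding normalization_equivalent_mod_def by (rule NEQ)
  show "conversion_equivalent_mod Rd R B" unfolding conversion_equivalent_mod_def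
    using conv_le conv_ge by (rule equalityI)
  show "canonical_mod Rd B" unfolding canonical_mod_def complete_mod_def terminating_mod_def SN_wf
    using SN_Rd CR_Rd left_red right_red by simp
qed

end

theorem theorem6p12:
  fixes R B D :: "('f, 'v) trs"
  assumes B_vars: "\<forall>(l, r) \<in> B. vars_term l = vars_term r"
    and R_trs: "wf_trs R"
    and complete: "complete_mod R B"
    and Rdot: "is_Rdot R B D"
  shows "wf_trs (Rddot D)
    \<and> normalization_equivalent_mod (Rddot D) R B
    \<and> conversion_equivalent_mod (Rddot D) R B
    \<and> canonical_mod (Rddot D) B"
proof -
  obtain nf where "nf_choice R B nf" "is_variant_reps B {(l, nf r) | l r. (l, r) \<in> R} D"
    using Rdot unfolding is_Rdot_def by blast
  then interpret thm_ctx R B D nf using assms by unfold_locales auto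
  show ?thesis by (rule main)
qed


end
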